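(* Let $k\ge 1$, let $b_0<\dots<b_k$ and $r_0>\dots>r_k=0$ be reals, let $s_i=\frac{b_i-b_{i-1}}{r_{i-1}-r_i}$ for $1\le i\le k$, and assume $s_1<\dots<s_k$. Let $p^i_1(t)=\min\{1,(e^{t/s_i}-1)/(e-1)\}$ for $1\le i\le k$, and let $\hat p_0=1-p^1_1$, $\hat p_i=p^i_1-p^{i+1}_1$ ($1\le i\le k-1$), $\hat p_k=p^k_1$. Then there is an online randomized strategy, i.e. a random nondecreasing sequence of transition times $0\le t_1\le t_2\le\dots\le t_k\le\infty$ (where $t_i$ is the time of the transition from state $i-1$ to state $i$, starting in state $0$), whose profile is $\hat p$: for every $t\ge 0$ and every $i\in\{0,\dots,k\}$, the probability that the strategy is in state $i$ at time $t$ equals $\hat p_i(t)$.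
   Context: In the additive multislope ski rental problem there are states $0,\dots,k$; state $i$ has buying cost $b_i$ and rental rate $r_i$, transitions are only of the form $i-1\to i$, and a deterministic strategy is a nondecreasing sequence of transition times. A randomized strategy is a probability distribution over deterministic strategies; its profile is the vector $(p_0(t),\dots,p_k(t))$ where $p_i(t)$ is the probability of being in state $i$ at time $t$. *)

theory Defs
  imports "HOL-Probability.Probability"
begin

definition slope :: "(nat \<Rightarrow> real) \<Rightarrow> (nat \<Rightarrow> real) \<Rightarrow> nat \<Rightarrow> real" where
  "slope b r i = (b i - b (i - 1)) / (r (i - 1) - r i)"

definition p1 :: "(nat \<Rightarrow> real) \<Rightarrow> nat \<Rightarrow> real \<Rightarrow> real" where
  "p1 s i t = min 1 ((exp (t / s i) - 1) / (exp 1 - 1))"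

definition phat :: "nat \<Rightarrow> (nat \<Rightarrow> real) \<Rightarrow> nat \<Rightarrow> real \<Rightarrow> real" where
  "phat k s i t = (if i = 0 then 1 - p1 s 1 t
                   else if i < k then p1 s i t - p1 s (Suc i) t
                   else p1 s k t)"

text \<open>A deterministic strategy is given by transition times tau 1 \<le> ... \<le> tau k in [0,\<infinity>],
  tau i being the time of the transition i-1 \<rightarrow> i.\<close>
definition in_state :: "nat \<Rightarrow> (nat \<Rightarrow> ennreal) \<Rightarrow> real \<Rightarrow> nat \<Rightarrow> bool" where
  "in_state k \<tau> t i \<longleftrightarrow> (i = 0 \<or> \<tau> i \<le> ennreal t) \<and> (i = k \<or> ennreal t < \<tau> (Suc i))"

end

theory Submission
  imports Defs
begin

lemma mIoc: "(l::real) \<le> u \<Longrightarrow> measure lborel {l<..u} = u - l"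
  by (simp add: measure_def)
lemma mIcc: "(l::real) \<le> u \<Longrightarrow> measure lborel {l..u} = u - l"
  by (simp add: measure_def)

lemma G1: assumes "0 \<le> (c::real)" "c \<le> d"
  shows "measure lborel ({0..1} \<inter> {u. c < u \<and> u \<le> d}) = min 1 d - min 1 c"
proof -
  have "{0..1} \<inter> {u. c < u \<and> u \<le> d} = {c<..min 1 d}" using assms by auto
  then show ?thesis using assms
    by (cases "c \<le> 1") (auto simp: mIoc min_def)
qed

lemma G2: assumes "0 \<le> (c::real)"
  shows "measure lborel ({0..1} \<inter> {u. u \<le> c}) = min 1 c"
proof -
  have "{0..1} \<inter> {u. u \<le> c} = {0..min 1 c}" using assms by auto
  then show ?thesis using assms by (simp add: mIcc)
qed

lemma G3: assumes "0 \<le> (c::real)"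
  shows "measure lborel ({0..1} \<inter> {u. c < u}) = 1 - min 1 c"
proof -
  have "{0..1} \<inter> {u. c < u} = {0..1} \<inter> {u. c < u \<and> u \<le> max 1 c}" by auto
  then show ?thesis using G1[of c "max 1 c"] assms by (simp add: min_def max_def)
qed

lemma Xle: assumes "0 < s" "(u::real) \<in> {0..1}"
  shows "s * ln (1 + (exp 1 - 1) * u) \<le> t \<longleftrightarrow> u \<le> (exp (t/s) - 1) / (exp 1 - 1)"
proof -
  have e: "exp 1 - 1 > (0::real)" by simp
  have p: "1 + (exp 1 - 1) * u > 0" using assms e by (simp add: add_pos_nonneg)
  have "s * ln (1 + (exp 1 - 1) * u) \<le> t \<longleftrightarrow> ln (1 + (exp 1 - 1) * u) \<le> t / s"
    using assms by (simp add: pos_le_divide_eq mult.commute)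
  also have "\<dots> \<longleftrightarrow> 1 + (exp 1 - 1) * u \<le> exp (t/s)"
    using p by (metis exp_le_cancel_iff exp_ln)
  also have "\<dots> \<longleftrightarrow> u \<le> (exp (t/s) - 1) / (exp 1 - 1)"
    using e by (simp add: pos_le_divide_eq algebra_simps)
  finally show ?thesis .
qed


lemma slope_mono:
  assumes "\<And>i. 1 \<le> i \<Longrightarrow> i < k \<Longrightarrow> sl i < sl (Suc i)"
  shows "1 \<le> i \<Longrightarrow> i \<le> j \<Longrightarrow> j \<le> k \<Longrightarrow> (sl i :: real) \<le> sl j"
proof (induction j rule: nat.induct)
  case zero then show ?case by simp
next
  case (Suc j)
  show ?case
  proof (cases "i = Suc j")
    case True then show ?thesis by simp
  next
    case False
    then have "sl i \<le> sl j" using Suc by simp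
    also have "sl j < sl (Suc j)" using assms[of j] Suc False by simp
    finally show ?thesis by simp
  qed
qed

theorem lemma3p3:
  fixes k :: nat and b r :: "nat \<Rightarrow> real"
  assumes "k \<ge> 1"
    and "\<And>i. 1 \<le> i \<Longrightarrow> i \<le> k \<Longrightarrow> b (i - 1) < b i"
    and "\<And>i. 1 \<le> i \<Longrightarrow> i \<le> k \<Longrightarrow> r (i - 1) > r i"
    and "r k = 0"
    and "\<And>i. 1 \<le> i \<Longrightarrow> i < k \<Longrightarrow> slope b r i < slope b r (Suc i)"
  shows "\<exists>M :: (nat \<Rightarrow> ennreal) measure.
           prob_space M \<and>
           sets M = sets (PiM {1..k} (\<lambda>_. (borel :: ennreal measure))) \<and>
           (AE \<tau> in M. \<forall>i j. 1 \<le> i \<longrightarrow> i \<le> j \<longrightarrow> j \<le> k \<longrightarrow> \<tau> i \<le> \<tau> j) \<and>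
           (\<forall>t::real. t \<ge> 0 \<longrightarrow> (\<forall>i\<le>k.
              measure M {\<tau> \<in> space M. in_state k \<tau> t i} = phat k (slope b r) i t))"
proof -
  define s where "s = slope b r"
  have spos: "s i > 0" if "1 \<le> i" "i \<le> k" for i
    using assms(2,3)[OF that] unfolding s_def slope_def by simp
  have smono: "s i \<le> s j" if "1 \<le> i" "i \<le> j" "j \<le> k" for i j
    using slope_mono[of k s i j] assms(5) that unfolding s_def by blast
  define X where "X u = ln (1 + (exp 1 - 1) * u)" for u :: real
  define f where "f u = (\<lambda>i\<in>{1..k}. ennreal (s i * X u))" for u
  define N where "N = PiM {1..k} (\<lambda>_. (borel :: ennreal measure))"
  define U where "U = uniform_measure lborel {0..1::real}"
  define M where "M = distr U N f"
  have U1: "emeasure lborel {0..1::real} = 1" by simp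
  have sU: "sets U = sets lborel" unfolding U_def by simp
  have spU: "space U = UNIV" unfolding U_def by simp
  have pU: "prob_space U" unfolding U_def by (rule prob_space_uniform_measure) (simp_all add: U1)
  have fmL: "f \<in> measurable lborel N"
    unfolding f_def N_def X_def
    by (rule measurable_restrict) measurable
  have fm: "f \<in> measurable U N"
  proof -
    have "measurable U N = measurable lborel N" by (rule measurable_cong_sets[OF sU refl])
    then show ?thesis using fmL by metis
  qed
  have sp: "prob_space M" unfolding M_def by (rule prob_space.prob_space_distr[OF pU fm])
  have sM: "sets M = sets N" unfolding M_def by simp
  have Xnn: "X u \<ge> 0" if "u \<in> {0..1}" for u
    unfolding X_def using that by simp
  have comp: "(\<lambda>\<tau>. \<tau> i) \<in> borel_measurable N" if "i \<in> {1..k}" for i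
    unfolding N_def using that by (rule measurable_component_singleton)
  have predm: "{\<tau> \<in> space N. \<forall>i\<in>{1..k}. \<forall>j\<in>{1..k}. i \<le> j \<longrightarrow> \<tau> i \<le> \<tau> j} \<in> sets N"
  proof -
    have c: "Measurable.pred N (\<lambda>\<tau>. i \<le> j \<longrightarrow> \<tau> i \<le> \<tau> j)" if "i \<in> {1..k}" "j \<in> {1..k}" for i j
      by (intro pred_intros_imp', unfold pred_def, rule borel_measurable_le[OF comp[OF that(1)] comp[OF that(2)]])
    have "Measurable.pred N (\<lambda>\<tau>. \<forall>i\<in>{1..k}. \<forall>j\<in>{1..k}. i \<le> j \<longrightarrow> \<tau> i \<le> \<tau> j)"
      by (intro pred_intros_finite finite_atLeastAtMost c)
    then show ?thesis by (rule predE)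
  qed
  have AEM: "AE \<tau> in M. \<forall>i j. 1 \<le> i \<longrightarrow> i \<le> j \<longrightarrow> j \<le> k \<longrightarrow> \<tau> i \<le> \<tau> j"
  proof -
    have "AE \<tau> in M. \<forall>i\<in>{1..k}. \<forall>j\<in>{1..k}. i \<le> j \<longrightarrow> \<tau> i \<le> \<tau> j"
      unfolding M_def
    proof (subst AE_distr_iff[OF fm predm])
      show "AE x in U. \<forall>i\<in>{1..k}. \<forall>j\<in>{1..k}. i \<le> j \<longrightarrow> f x i \<le> f x j"
        unfolding U_def
      proof (rule AE_uniform_measureI)
        show "{0..1::real} \<in> sets lborel" by simp
        show "AE x in lborel. x \<in> {0..1} \<longrightarrow> (\<forall>i\<in>{1..k}. \<forall>j\<in>{1..k}. i \<le> j \<longrightarrow> f x i \<le> f x j)"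
        proof (rule AE_I2, safe)
          fix x i j assume x: "x \<in> {0..1::real}" and ij: "i \<in> {1..k}" "j \<in> {1..k}" "i \<le> j"
          have "s i * X x \<le> s j * X x"
            using smono[of i j] ij Xnn[OF x] by (simp add: mult_right_mono)
          then show "f x i \<le> f x j" using ij unfolding f_def by (simp add: ennreal_leI)
        qed
      qed
    qed
    then show ?thesis by (rule AE_mp) auto
  qed
  have main: "measure M {\<tau> \<in> space M. in_state k \<tau> t i} = phat k s i t"
    if t: "t \<ge> 0" and i: "i \<le> k" for t i
  proof -
    define a where "a j = (exp (t / s j) - 1) / (exp 1 - 1)" for j
    have e: "exp 1 - 1 > (0::real)" by simp
    have ann: "a j \<ge> 0" if "1 \<le> j" "j \<le> k" for j
      unfolding a_def using e spos[OF that] t by (simp add: divide_nonneg_pos)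
    have amono: "a (Suc j) \<le> a j" if "1 \<le> j" "j < k" for j
    proof -
      have "t / s (Suc j) \<le> t / s j"
        using spos[of j] spos[of "Suc j"] smono[of j "Suc j"] that t
        by (simp add: frac_le)
      then show ?thesis unfolding a_def using e by (simp add: divide_right_mono)
    qed
    have key: "f u j \<le> ennreal t \<longleftrightarrow> u \<le> a j" if "u \<in> {0..1}" "1 \<le> j" "j \<le> k" for u j
    proof -
      have "f u j \<le> ennreal t \<longleftrightarrow> s j * X u \<le> t"
        using that t unfolding f_def by simp
      also have "\<dots> \<longleftrightarrow> u \<le> a j"
        unfolding X_def a_def by (rule Xle[OF spos[OF that(2,3)] that(1)])
      finally show ?thesis .
    qed
    have key2: "ennreal t < f u j \<longleftrightarrow> \<not> u \<le> a j" if "u \<in> {0..1}" "1 \<le> j" "j \<le> k" for u j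
      using key[OF that] by (simp add: not_le[symmetric])
    have Am: "{\<tau> \<in> space N. in_state k \<tau> t i} \<in> sets N"
    proof -
      consider "i = 0" | "i = k" | "0 < i" "i < k" using i by linarith
      then show ?thesis
      proof cases
        case 1
        then have "{\<tau> \<in> space N. in_state k \<tau> t i} = {\<tau> \<in> space N. ennreal t < \<tau> 1}"
          using assms(1) by (auto simp: in_state_def)
        moreover have "{\<tau> \<in> space N. ennreal t < \<tau> 1} \<in> sets N"
          using assms(1) by (intro borel_measurable_less measurable_const comp) auto
        ultimately show ?thesis by simp
      next
        case 2
        then have "{\<tau> \<in> space N. in_state k \<tau> t i} = {\<tau> \<in> space N. \<tau> k \<le> ennreal t}"
          using assms(1) by (auto simp: in_state_def)
        moreover have "{\<tau> \<in> space N. \<tau> k \<le> ennreal t} \<in> sets N"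
          using assms(1) by (intro borel_measurable_le measurable_const comp) auto
        ultimately show ?thesis by simp
      next
        case 3
        then have "{\<tau> \<in> space N. in_state k \<tau> t i} = {\<tau> \<in> space N. \<tau> i \<le> ennreal t \<and> ennreal t < \<tau> (Suc i)}"
          by (auto simp: in_state_def)
        moreover have "{\<tau> \<in> space N. \<tau> i \<le> ennreal t \<and> ennreal t < \<tau> (Suc i)} \<in> sets N"
        proof -
          have "{\<tau> \<in> space N. \<tau> i \<le> ennreal t \<and> ennreal t < \<tau> (Suc i)} =
                {\<tau> \<in> space N. \<tau> i \<le> ennreal t} \<inter> {\<tau> \<in> space N. ennreal t < \<tau> (Suc i)}" by auto
          moreover have "{\<tau> \<in> space N. \<tau> i \<le> ennreal t} \<in> sets N"
            using 3 by (intro borel_measurable_le measurable_const comp) auto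
          moreover have "{\<tau> \<in> space N. ennreal t < \<tau> (Suc i)} \<in> sets N"
            using 3 by (intro borel_measurable_less measurable_const comp) auto
          ultimately show ?thesis by simp
        qed
        ultimately show ?thesis by simp
      qed
    qed
    have fsp: "f u \<in> space N" for u unfolding f_def N_def by (simp add: space_PiM)
    have "measure M {\<tau> \<in> space M. in_state k \<tau> t i} = measure U (f -` {\<tau> \<in> space N. in_state k \<tau> t i} \<inter> space U)"
      unfolding M_def using measure_distr[OF fm Am] by (simp add: space_distr)
    also have "f -` {\<tau> \<in> space N. in_state k \<tau> t i} \<inter> space U = {u. in_state k (f u) t i}"
      using fsp spU by auto
    also have "measure U {u. in_state k (f u) t i} = measure lborel ({0..1} \<inter> {u. in_state k (f u) t i})"
    proof -
      have "{u. in_state k (f u) t i} \<in> sets lborel"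
        using measurable_sets[OF fmL Am] fsp by (simp add: vimage_def)
      then show ?thesis unfolding U_def by (simp add: measure_def divide_ennreal_def)
    qed
    also have "\<dots> = phat k s i t"
    proof -
      consider "i = 0" | "i = k" | "0 < i" "i < k" using i by linarith
      then show ?thesis
      proof cases
        case 1
        have "{0..1} \<inter> {u. in_state k (f u) t i} = {0..1} \<inter> {u. a 1 < u}"
          using 1 assms(1) key2[of _ 1] by (auto simp: in_state_def not_le)
        then show ?thesis using 1 G3[OF ann[of 1]] assms(1)
          by (simp add: phat_def p1_def a_def)
      next
        case 2
        have "{0..1} \<inter> {u. in_state k (f u) t i} = {0..1} \<inter> {u. u \<le> a k}"
          using 2 assms(1) key[of _ k] by (auto simp: in_state_def)
        then show ?thesis using 2 G2[OF ann[of k]] assms(1)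
          by (simp add: phat_def p1_def a_def)
      next
        case 3
        have "{0..1} \<inter> {u. in_state k (f u) t i} = {0..1} \<inter> {u. a (Suc i) < u \<and> u \<le> a i}"
          using 3 key[of _ i] key2[of _ "Suc i"] by (auto simp: in_state_def not_le)
        then show ?thesis using 3 G1[OF ann[of "Suc i"] amono[of i]]
          by (simp add: phat_def p1_def a_def)
      qed
    qed
    finally show ?thesis .
  qed
  show ?thesis
    apply (rule exI[of _ M])
    using sp sM AEM main unfolding N_def s_def by auto
qed

end
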